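(* In the Setting, under (SA1)–(SA2), let $\mathcal I\in\wp_k[n]$, distinct $i,j\in\mathcal I$, distinct $\alpha,\beta\in\mathcal I^{\mathtt C}$ satisfy $h(\mathcal I)h(\mathcal I^{ij}_{\alpha\beta})h(\mathcal I^i_\alpha)h(\mathcal I^i_\beta)h(\mathcal I^j_\alpha)h(\mathcal I^j_\beta)\neq0$. If $B^{ij}_{\alpha\beta}$ is a perfect square in $\Lambda$, then $Y(\mathcal I)^{ij}_{\alpha\beta}\in\mathbb C$.
   Context: Setting. $d\ge1$, $1\le k\le n$; $\mathbf t=(t_1,\dots,t_d)$ indeterminates; $\Lambda:=\mathbb C[t_1^{\pm1},\dots,t_d^{\pm1}]$ (a UFD whose units are exactly the elements $c\,\mathbf t^{\mathbf e}$, $c\in\mathbb C\setminus\{0\}$, $\mathbf e\in\mathbb Z^d$), $\mathbb F$ its fraction field, $\overline{\mathbb F}$ an algebraic closure. $[n]=\{1,\dots,n\}$, $\wp_k[n]$ the $k$-subsets. For $\mathcal I\in\wp_k[n]$: $\mathcal I^{\mathtt C}=[n]\setminus\mathcal I$; $\mathcal I^i_\alpha=(\mathcal I\setminus\{i\})\cup\{\alpha\}$; $\mathcal I^{ij}_{\alpha\beta}=(\mathcal I\setminus\{i,j\})\cup\{\alpha,\beta\}$. $\mathbf L$ ($k\times n$), $\mathbf R$ ($n\times k$) with entries in $\overline{\mathbb F}$; $\Delta_{\mathbf L}(\mathcal I)$, $\Delta_{\mathbf R}(\mathcal I)$ maximal minors on columns, resp. rows, $\mathcal I$; $h(\mathcal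 I):=\Delta_{\mathbf L}(\mathcal I)\Delta_{\mathbf R}(\mathcal I)$; $\mathfrak G:=\{\mathcal I:\Delta_{\mathbf L}(\mathcal I)\ne0\}$. (SA1) all $\Delta_{\mathbf R}(\mathcal I)\ne0$; (SA2) $h(\mathcal I)$ is a unit of $\Lambda$ for every $\mathcal I\in\mathfrak G$. $Y(\mathcal I)^{ij}_{\alpha\beta}:=-\mathrm{sign}[(i-\alpha)(i-\beta)(j-\alpha)(j-\beta)]\frac{\Delta_{\mathbf R}(\mathcal I^i_\alpha)\Delta_{\mathbf R}(\mathcal I^j_\beta)}{\Delta_{\mathbf R}(\mathcal I^i_\beta)\Delta_{\mathbf R}(\mathcal I^j_\alpha)}$. $A^{ij}_{\alpha\beta}:=h(\mathcal I)h(\mathcal I^{ij}_{\alpha\beta})-h(\mathcal I^i_\alpha)h(\mathcal I^j_\beta)-h(\mathcal I^i_\beta)h(\mathcal I^j_\alpha)$, $B^{ij}_{\alpha\beta}:=(A^{ij}_{\alpha\beta})^2-4h(\mathcal I^i_\alpha)h(\mathcal I^j_\beta)h(\mathcal I^i_\beta)h(\mathcal I^j_\alpha)$. *)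

theory Defs
  imports "HOL-Library.Poly_Mapping" "HOL-Computational_Algebra.Polynomial"
    "Jordan_Normal_Form.Determinant" "Jordan_Normal_Form.DL_Submatrix"
begin

text \<open>Laurent polynomials with complex coefficients: finitely supported maps from
  integer exponent vectors (indexed by nat) to complex coefficients; multiplication is
  the group-algebra product.\<close>
type_synonym lpoly = "(nat \<Rightarrow>\<^sub>0 int) \<Rightarrow>\<^sub>0 complex"

text \<open>Lambda = C[t_1^{+-1},...,t_d^{+-1}]: the subring of Laurent polynomials only
  involving the variables with index < d (t_{i+1} corresponds to index i).\<close>
definition Lam :: "nat \<Rightarrow> lpoly set" where
  "Lam d = {p. \<forall>e \<in> Poly_Mapping.keys p. Poly_Mapping.keys e \<subseteq> {..<d}}"

definition lconst :: "complex \<Rightarrow> lpoly" where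
  "lconst c = Poly_Mapping.single 0 c"

definition unit_of_Lam :: "nat \<Rightarrow> lpoly \<Rightarrow> bool" where
  "unit_of_Lam d u \<longleftrightarrow> u \<in> Lam d \<and> (\<exists>v \<in> Lam d. u * v = 1)"

text \<open>emb realises Fbar as an algebraic closure of the fraction field of Lambda:
  an injective ring embedding of Lambda into an algebraically closed field such that
  every element of the field is algebraic over the image of Lambda.\<close>
definition is_alg_closure_emb :: "nat \<Rightarrow> (lpoly \<Rightarrow> 'a :: alg_closed_field) \<Rightarrow> bool" where
  "is_alg_closure_emb d emb \<longleftrightarrow>
     emb 0 = 0 \<and> emb 1 = 1 \<and>
     (\<forall>p \<in> Lam d. \<forall>q \<in> Lam d. emb (p + q) = emb p + emb q \<and> emb (p * q) = emb p * emb q) \<and>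
     inj_on emb (Lam d) \<and>
     (\<forall>x :: 'a. \<exists>P :: lpoly poly. P \<noteq> 0 \<and> (\<forall>i. coeff P i \<in> Lam d) \<and>
          poly (map_poly emb P) x = 0)"

text \<open>Index sets are k-subsets of {0..<n} (0-based version of [n]).\<close>
definition ksubsets :: "nat \<Rightarrow> nat \<Rightarrow> nat set set" where
  "ksubsets k n = {I. I \<subseteq> {0..<n} \<and> card I = k}"

definition swap1 :: "nat set \<Rightarrow> nat \<Rightarrow> nat \<Rightarrow> nat set" where
  "swap1 I i a = insert a (I - {i})"

definition swap2 :: "nat set \<Rightarrow> nat \<Rightarrow> nat \<Rightarrow> nat \<Rightarrow> nat \<Rightarrow> nat set" where
  "swap2 I i j a b = insert a (insert b (I - {i, j}))"

definition DeltaL :: "nat \<Rightarrow> 'a :: comm_ring_1 mat \<Rightarrow> nat set \<Rightarrow> 'a" where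
  "DeltaL k L I = det (submatrix L {0..<k} I)"

definition DeltaR :: "nat \<Rightarrow> 'a :: comm_ring_1 mat \<Rightarrow> nat set \<Rightarrow> 'a" where
  "DeltaR k R I = det (submatrix R I {0..<k})"

definition hh :: "nat \<Rightarrow> 'a :: comm_ring_1 mat \<Rightarrow> 'a mat \<Rightarrow> nat set \<Rightarrow> 'a" where
  "hh k L R I = DeltaL k L I * DeltaR k R I"

definition Yc :: "nat \<Rightarrow> 'a :: field mat \<Rightarrow> nat set \<Rightarrow> nat \<Rightarrow> nat \<Rightarrow> nat \<Rightarrow> nat \<Rightarrow> 'a" where
  "Yc k R I i j a b =
     - of_int (sgn ((int i - int a) * (int i - int b) * (int j - int a) * (int j - int b)))
     * (DeltaR k R (swap1 I i a) * DeltaR k R (swap1 I j b))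
       / (DeltaR k R (swap1 I i b) * DeltaR k R (swap1 I j a))"

definition Ac :: "nat \<Rightarrow> 'a :: comm_ring_1 mat \<Rightarrow> 'a mat \<Rightarrow> nat set \<Rightarrow> nat \<Rightarrow> nat \<Rightarrow> nat \<Rightarrow> nat \<Rightarrow> 'a" where
  "Ac k L R I i j a b =
     hh k L R I * hh k L R (swap2 I i j a b)
     - hh k L R (swap1 I i a) * hh k L R (swap1 I j b)
     - hh k L R (swap1 I i b) * hh k L R (swap1 I j a)"

definition Bc :: "nat \<Rightarrow> 'a :: comm_ring_1 mat \<Rightarrow> 'a mat \<Rightarrow> nat set \<Rightarrow> nat \<Rightarrow> nat \<Rightarrow> nat \<Rightarrow> nat \<Rightarrow> 'a" where
  "Bc k L R I i j a b =
     (Ac k L R I i j a b)^2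
     - 4 * hh k L R (swap1 I i a) * hh k L R (swap1 I j b)
         * hh k L R (swap1 I i b) * hh k L R (swap1 I j a)"

end

theory Submission
  imports Defs
begin


lemma Sum_any_when_eq: "(\<Sum>q. (g q when q = c)) = (g c :: 'b::comm_monoid_add)"
  by (simp add: when_def)

lemma lookup_mult_group:
  fixes f g :: "('a::ab_group_add) \<Rightarrow>\<^sub>0 ('b::comm_semiring_0)"
  shows "Poly_Mapping.lookup (f*g) k = (\<Sum>l\<in>Poly_Mapping.keys f. Poly_Mapping.lookup f l * Poly_Mapping.lookup g (k - l))"
proof -
  have "Poly_Mapping.lookup (f*g) k = (\<Sum>l. Poly_Mapping.lookup f l * (\<Sum>q. Poly_Mapping.lookup g q when k = l + q))"
    by (rule lookup_mult)
  also have "\<dots> = (\<Sum>l::'a. Poly_Mapping.lookup f l * Poly_Mapping.lookup g (k - l))"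
  proof -
    have "\<And>l::'a. (\<Sum>q. Poly_Mapping.lookup g q when k = l + q) = (\<Sum>q. Poly_Mapping.lookup g q when q = k - l)"
      by (rule Sum_any.cong) (auto simp: when_def algebra_simps)
    then show ?thesis by (simp add: when_def)
  qed
  also have "\<dots> = (\<Sum>l\<in>Poly_Mapping.keys f. Poly_Mapping.lookup f l * Poly_Mapping.lookup g (k - l))"
    by (rule Sum_any.expand_superset) (auto simp: in_keys_iff)
  finally show ?thesis .
qed

lemma lookup_mult_unique:
  fixes f g :: "('a::ab_group_add) \<Rightarrow>\<^sub>0 ('b::comm_semiring_0)"
  assumes a: "a \<in> Poly_Mapping.keys f" and b: "b \<in> Poly_Mapping.keys g"
    and u: "\<And>a' b'. a' \<in> Poly_Mapping.keys f \<Longrightarrow> b' \<in> Poly_Mapping.keys g \<Longrightarrow> a' + b' = a + b \<Longrightarrow> a' = a"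
  shows "Poly_Mapping.lookup (f*g) (a+b) = Poly_Mapping.lookup f a * Poly_Mapping.lookup g b"
proof -
  have "Poly_Mapping.lookup (f*g) (a+b) = (\<Sum>l\<in>Poly_Mapping.keys f. Poly_Mapping.lookup f l * Poly_Mapping.lookup g (a + b - l))"
    by (rule lookup_mult_group)
  also have "\<dots> = Poly_Mapping.lookup f a * Poly_Mapping.lookup g (a + b - a) + (\<Sum>l\<in>Poly_Mapping.keys f - {a}. Poly_Mapping.lookup f l * Poly_Mapping.lookup g (a + b - l))"
    using a by (simp add: sum.remove)
  also have "(\<Sum>l\<in>Poly_Mapping.keys f - {a}. Poly_Mapping.lookup f l * Poly_Mapping.lookup g (a + b - l)) = 0"
  proof (rule sum.neutral, rule ballI)
    fix l assume l: "l \<in> Poly_Mapping.keys f - {a}"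
    show "Poly_Mapping.lookup f l * Poly_Mapping.lookup g (a + b - l) = 0"
    proof (cases "a + b - l \<in> Poly_Mapping.keys g")
      case True
      have "l + (a + b - l) = a + b" by (simp add: algebra_simps)
      with u[OF _ True] l show ?thesis by auto
    qed (simp add: in_keys_iff)
  qed
  finally show ?thesis by simp
qed

lemma unit_single:
  fixes f g :: "('a::linordered_ab_group_add) \<Rightarrow>\<^sub>0 ('b::idom)"
  assumes fg: "f * g = 1"
  shows "\<exists>e c. f = Poly_Mapping.single e c \<and> c \<noteq> 0"
proof -
  define F where "F = Poly_Mapping.keys f"
  define G where "G = Poly_Mapping.keys g"
  have f0: "f \<noteq> 0" and g0: "g \<noteq> 0" using fg by auto
  have F: "finite F" "F \<noteq> {}" using f0 by (auto simp: F_def)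
  have G: "finite G" "G \<noteq> {}" using g0 by (auto simp: G_def)
  have mx: "Poly_Mapping.lookup (f*g) (Max F + Max G) = Poly_Mapping.lookup f (Max F) * Poly_Mapping.lookup g (Max G)"
  proof (rule lookup_mult_unique)
    show "Max F \<in> Poly_Mapping.keys f" using F by (simp add: F_def[symmetric])
    show "Max G \<in> Poly_Mapping.keys g" using G by (simp add: G_def[symmetric])
    fix a' b' assume a': "a' \<in> Poly_Mapping.keys f" and b': "b' \<in> Poly_Mapping.keys g" and e: "a' + b' = Max F + Max G"
    have "a' \<le> Max F" "b' \<le> Max G" using a' b' F G by (auto simp: F_def G_def)
    then show "a' = Max F" using e by (metis add_mono_thms_linordered_field(3) order_less_le order_less_irrefl)
  qed
  have mn: "Poly_Mapping.lookup (f*g) (Min F + Min G) = Poly_Mapping.lookup f (Min F) * Poly_Mapping.lookup g (Min G)"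
  proof (rule lookup_mult_unique)
    show "Min F \<in> Poly_Mapping.keys f" using F by (simp add: F_def[symmetric])
    show "Min G \<in> Poly_Mapping.keys g" using G by (simp add: G_def[symmetric])
    fix a' b' assume a': "a' \<in> Poly_Mapping.keys f" and b': "b' \<in> Poly_Mapping.keys g" and e: "a' + b' = Min F + Min G"
    have "Min F \<le> a'" "Min G \<le> b'" using a' b' F G by (auto simp: F_def G_def)
    then show "a' = Min F" using e by (metis add_mono_thms_linordered_field(3) order_less_le order_less_irrefl)
  qed
  have nzF: "Poly_Mapping.lookup f x \<noteq> 0" if "x \<in> F" for x using that by (simp add: F_def in_keys_iff)
  have nzG: "Poly_Mapping.lookup g x \<noteq> 0" if "x \<in> G" for x using that by (simp add: G_def in_keys_iff)
  have "Max F + Max G \<in> Poly_Mapping.keys (f*g)" using mx nzF nzG F G by (simp add: in_keys_iff)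
  hence 1: "Max F + Max G = 0" using fg by simp
  have "Min F + Min G \<in> Poly_Mapping.keys (f*g)" using mn nzF nzG F G by (simp add: in_keys_iff)
  hence 2: "Min F + Min G = 0" using fg by simp
  have "Min F \<le> Max F" "Min G \<le> Max G" using F G by auto
  hence eq: "Min F = Max F" using 1 2
    by (metis add_mono_thms_linordered_field(3) order_less_le order_less_irrefl)
  have Fs: "F = {Max F}"
  proof -
    have "\<And>x. x \<in> F \<Longrightarrow> x = Max F" using eq F by (metis Max_ge Min_le order_antisym)
    thus ?thesis using F by auto
  qed
  have "f = Poly_Mapping.single (Max F) (Poly_Mapping.lookup f (Max F))"
  proof (rule poly_mapping_eqI)
    fix x show "Poly_Mapping.lookup f x = Poly_Mapping.lookup (Poly_Mapping.single (Max F) (Poly_Mapping.lookup f (Max F))) x"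
    proof (cases "x = Max F")
      case False
      hence "x \<notin> F" using Fs by auto
      thus ?thesis using False by (simp add: F_def in_keys_iff lookup_single_not_eq)
    qed simp
  qed
  thus ?thesis using nzF Fs by blast
qed

lemma unit_plus_one_const:
  fixes x y z :: lpoly
  assumes "x * y = 1" "(1 + x) * z = 1"
  shows "\<exists>c. x = lconst c"
proof -
  obtain e c where x: "x = Poly_Mapping.single e c" "c \<noteq> 0" using unit_single[OF assms(1)] by blast
  obtain e' c' where x': "1 + x = Poly_Mapping.single e' c'" using unit_single[OF assms(2)] by blast
  show ?thesis
  proof (cases "e = 0")
    case True thus ?thesis using x by (auto simp: lconst_def)
  next
    case False
    have l0: "Poly_Mapping.lookup (1 + x) 0 = 1" using False x
      by (simp add: lookup_add lookup_single_not_eq)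
    have le: "Poly_Mapping.lookup (1 + x) e = c" using False x
      by (simp add: lookup_add lookup_one)
    have "e' = 0" using l0 x' by (metis lookup_single_not_eq zero_neq_one)
    moreover have "e' = e" using le x' x(2) by (metis lookup_single_not_eq)
    ultimately show ?thesis using False by simp
  qed
qed




lemma Lam_add: "p \<in> Lam d \<Longrightarrow> q \<in> Lam d \<Longrightarrow> p + q \<in> Lam d"
proof -
  assume p: "p \<in> Lam d" and q: "q \<in> Lam d"
  have p': "\<forall>e\<in>Poly_Mapping.keys p. Poly_Mapping.keys e \<subseteq> {..<d}" using p by (simp add: Lam_def)
  have q': "\<forall>e\<in>Poly_Mapping.keys q. Poly_Mapping.keys e \<subseteq> {..<d}" using q by (simp add: Lam_def)
  have "\<forall>e\<in>Poly_Mapping.keys (p+q). Poly_Mapping.keys e \<subseteq> {..<d}"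
  proof
    fix e assume "e \<in> Poly_Mapping.keys (p+q)"
    hence "e \<in> Poly_Mapping.keys p \<union> Poly_Mapping.keys q" by (rule subsetD[OF keys_add[of p q]])
    thus "Poly_Mapping.keys e \<subseteq> {..<d}" using p' q' by (elim UnE) auto
  qed
  thus ?thesis by (simp add: Lam_def)
qed

lemma Lam_mult: "p \<in> Lam d \<Longrightarrow> q \<in> Lam d \<Longrightarrow> p * q \<in> Lam d"
proof -
  assume p: "p \<in> Lam d" and q: "q \<in> Lam d"
  { fix e assume "e \<in> Poly_Mapping.keys (p*q)"
    then obtain a b where e: "e = a + b" "a \<in> Poly_Mapping.keys p" "b \<in> Poly_Mapping.keys q"
      using keys_mult by blast
    have "Poly_Mapping.keys e \<subseteq> Poly_Mapping.keys a \<union> Poly_Mapping.keys b" unfolding e(1) by (rule keys_add)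
    hence "Poly_Mapping.keys e \<subseteq> {..<d}" using p q e by (auto simp: Lam_def) }
  thus ?thesis by (auto simp: Lam_def)
qed

lemma Lam_uminus: "p \<in> Lam d \<Longrightarrow> - p \<in> Lam d"
  unfolding Lam_def by simp

lemma Lam_diff: "p \<in> Lam d \<Longrightarrow> q \<in> Lam d \<Longrightarrow> p - q \<in> Lam d"
  using Lam_add[of p d "-q"] Lam_uminus by simp

lemma Lam_lconst: "lconst c \<in> Lam d"
  unfolding Lam_def lconst_def by auto

lemma lconst_one: "lconst 1 = 1" by (simp add: lconst_def)
lemma lconst_mult: "lconst a * lconst b = lconst (a*b)" by (simp add: lconst_def mult_single)
lemma lconst_uminus: "lconst (-a) = - lconst a" by (simp add: lconst_def single_uminus)
lemma lconst_add: "lconst (a+b) = lconst a + lconst b" by (simp add: lconst_def single_add)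

lemma Lam_one: "1 \<in> Lam d" using Lam_lconst[of 1 d] by (simp add: lconst_one)

context
  fixes d and emb :: "lpoly \<Rightarrow> 'a :: alg_closed_field"
  assumes H: "is_alg_closure_emb d emb"
begin

lemma Hparts: "emb 0 = 0" "emb 1 = 1"
  "\<forall>p \<in> Lam d. \<forall>q \<in> Lam d. emb (p + q) = emb p + emb q \<and> emb (p * q) = emb p * emb q"
  "inj_on emb (Lam d)"
  using H unfolding is_alg_closure_emb_def by blast+

lemma emb_add: "p \<in> Lam d \<Longrightarrow> q \<in> Lam d \<Longrightarrow> emb (p + q) = emb p + emb q"
  using Hparts(3) by blast
lemma emb_mult: "p \<in> Lam d \<Longrightarrow> q \<in> Lam d \<Longrightarrow> emb (p * q) = emb p * emb q"
  using Hparts(3) by blast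
lemma emb_one: "emb 1 = 1" by (rule Hparts(2))
lemma emb_zero: "emb 0 = 0" by (rule Hparts(1))
lemma emb_inj: "p \<in> Lam d \<Longrightarrow> q \<in> Lam d \<Longrightarrow> emb p = emb q \<Longrightarrow> p = q"
  using Hparts(4) by (rule inj_onD)
lemma emb_uminus: "p \<in> Lam d \<Longrightarrow> emb (- p) = - emb p"
  using emb_add[of p "-p"] Lam_uminus[of p d] emb_zero by (simp add: eq_neg_iff_add_eq_0 add.commute)
lemma emb_diff: "p \<in> Lam d \<Longrightarrow> q \<in> Lam d \<Longrightarrow> emb (p - q) = emb p - emb q"
  using emb_add[of p "-q"] emb_uminus[of q] Lam_uminus[of q d] by simp

definition "EE = emb ` Lam d"

lemma EE_add: "x \<in> EE \<Longrightarrow> y \<in> EE \<Longrightarrow> x + y \<in> EE"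
proof -
  assume "x \<in> EE" "y \<in> EE"
  then obtain p q where "p \<in> Lam d" "q \<in> Lam d" "x = emb p" "y = emb q" unfolding EE_def by blast
  hence "x + y = emb (p + q)" "p + q \<in> Lam d" by (simp_all add: emb_add Lam_add)
  thus ?thesis unfolding EE_def by blast
qed
lemma EE_mult: "x \<in> EE \<Longrightarrow> y \<in> EE \<Longrightarrow> x * y \<in> EE"
proof -
  assume "x \<in> EE" "y \<in> EE"
  then obtain p q where "p \<in> Lam d" "q \<in> Lam d" "x = emb p" "y = emb q" unfolding EE_def by blast
  hence "x * y = emb (p * q)" "p * q \<in> Lam d" by (simp_all add: emb_mult Lam_mult)
  thus ?thesis unfolding EE_def by blast
qed
lemma EE_diff: "x \<in> EE \<Longrightarrow> y \<in> EE \<Longrightarrow> x - y \<in> EE"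
proof -
  assume "x \<in> EE" "y \<in> EE"
  then obtain p q where "p \<in> Lam d" "q \<in> Lam d" "x = emb p" "y = emb q" unfolding EE_def by blast
  hence "x - y = emb (p - q)" "p - q \<in> Lam d" by (simp_all add: emb_diff Lam_diff)
  thus ?thesis unfolding EE_def by blast
qed
lemma EE_obtain: "x \<in> EE \<Longrightarrow> \<exists>p\<in>Lam d. emb p = x" unfolding EE_def by blast

lemma EE_emb: "p \<in> Lam d \<Longrightarrow> emb p \<in> EE" unfolding EE_def by auto
lemma EE_one: "1 \<in> EE" using EE_emb[OF Lam_one] emb_one by simp
lemma EE_mone: "-1 \<in> EE"
proof -
  have "(0::lpoly) \<in> Lam d" using Lam_lconst[of 0 d] by (simp add: lconst_def)
  hence "emb 0 \<in> EE" by (rule EE_emb)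
  hence "emb 0 - 1 \<in> EE" using EE_one by (rule EE_diff)
  thus ?thesis by (simp add: emb_zero)
qed
lemma EE_pm: "s = 1 \<or> s = -1 \<Longrightarrow> s \<in> EE" using EE_one EE_mone by auto

lemma two_nz: "emb (lconst (1/2)) * 2 = (1::'a)"
proof -
  have "emb (lconst (1/2)) * 2 = emb (lconst (1/2)) * emb (lconst 2)"
    using emb_add[of 1 1] Lam_one emb_one lconst_add[of 1 1] lconst_one by simp
  also have "\<dots> = emb (lconst (1/2) * lconst 2)" using emb_mult Lam_lconst by metis
  also have "\<dots> = 1" by (simp add: lconst_mult lconst_one emb_one)
  finally show ?thesis .
qed

lemma EE_half: "inverse 2 \<in> EE"
proof -
  have "(2::'a) \<noteq> 0" using two_nz by auto
  hence "emb (lconst (1/2)) = inverse 2" using two_nz by (simp add: field_simps)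
  thus ?thesis using EE_emb[OF Lam_lconst] by metis
qed

lemma unit_mult: "unit_of_Lam d u \<Longrightarrow> unit_of_Lam d v \<Longrightarrow> unit_of_Lam d (u*v)"
  unfolding unit_of_Lam_def
proof (elim conjE bexE, intro conjI)
  fix u' v' assume "u \<in> Lam d" "v \<in> Lam d" "u' \<in> Lam d" "u * u' = 1" "v' \<in> Lam d" "v * v' = 1"
  thus "u * v \<in> Lam d" by (simp add: Lam_mult)
  show "\<exists>w\<in>Lam d. u * v * w = 1"
  proof (rule bexI[of _ "u' * v'"])
    show "u' * v' \<in> Lam d" using \<open>u' \<in> Lam d\<close> \<open>v' \<in> Lam d\<close> by (simp add: Lam_mult)
    have "u * v * (u' * v') = (u * u') * (v * v')" by (simp add: ac_simps)
    thus "u * v * (u' * v') = 1" using \<open>u * u' = 1\<close> \<open>v * v' = 1\<close> by simp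
  qed
qed

end



lemma pm_cases: "(e::'a::comm_ring_1) = 1 \<or> e = -1 \<Longrightarrow> e * e = 1" by auto

context
  fixes d and emb :: "lpoly \<Rightarrow> 'a :: alg_closed_field"
  assumes H: "is_alg_closure_emb d emb"
begin

lemma core:
  fixes e1 e2 P1 P2 Q1 Q2 :: 'a and uI u12 u1 u2 :: lpoly
  assumes e1: "e1 = 1 \<or> e1 = -1" and e2: "e2 = 1 \<or> e2 = -1"
    and nz: "P1 \<noteq> 0" "P2 \<noteq> 0" "Q1 \<noteq> 0" "Q2 \<noteq> 0"
    and uI: "unit_of_Lam d uI" and u12: "unit_of_Lam d u12"
    and u1: "unit_of_Lam d u1" and u2: "unit_of_Lam d u2"
    and hI: "emb uI * emb u12 = (e1*P1+e2*P2)*(e1*Q1+e2*Q2)"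
    and h1: "P1*Q1 = emb u1" and h2: "P2*Q2 = emb u2"
    and sq: "\<exists>q\<in>Lam d. (emb uI * emb u12 - emb u1 - emb u2)^2 - 4 * emb u1 * emb u2 = (emb q)^2"
  shows "\<exists>c. Q1/Q2 = emb (lconst c)"
proof -
  obtain q where q: "q \<in> Lam d" "(emb uI * emb u12 - emb u1 - emb u2)^2 - 4 * emb u1 * emb u2 = (emb q)^2"
    using sq by blast
  have inL: "uI \<in> Lam d" "u12 \<in> Lam d" "u1 \<in> Lam d" "u2 \<in> Lam d"
    using uI u12 u1 u2 by (auto simp: unit_of_Lam_def)
  define A where "A = emb uI * emb u12 - emb u1 - emb u2"
  define \<epsilon> where "\<epsilon> = e1 * e2"
  have eps: "\<epsilon> = 1 \<or> \<epsilon> = -1" using e1 e2 by (auto simp: \<epsilon>_def)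
  have hA: "A = \<epsilon> * (P1*Q2 + P2*Q1)"
    unfolding A_def hI h1[symmetric] h2[symmetric] \<epsilon>_def using e1 e2 by (auto simp: algebra_simps)
  have epsA: "\<epsilon> * A = P1*Q2 + P2*Q1" unfolding hA using pm_cases[OF eps] by (simp add: mult.assoc[symmetric])
  have hB: "(P1*Q2 - P2*Q1)^2 = (emb q)^2"
  proof -
    have "(P1*Q2 - P2*Q1)^2 = (\<epsilon> * A)^2 - 4 * (P1*Q1) * (P2*Q2)"
      unfolding epsA by (simp add: power2_eq_square algebra_simps)
    also have "\<dots> = A^2 - 4 * emb u1 * emb u2"
      using pm_cases[OF eps] h1 h2 by (simp add: power2_eq_square algebra_simps)
    finally show ?thesis using q(2) unfolding A_def by simp
  qed
  obtain \<sigma> :: 'a where sig: "\<sigma> = 1 \<or> \<sigma> = -1" "P1*Q2 - P2*Q1 = \<sigma> * emb q"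
  proof -
    have "(P1*Q2 - P2*Q1 - emb q) * (P1*Q2 - P2*Q1 + emb q) = 0"
      using hB by (simp add: power2_eq_square algebra_simps)
    hence "P1*Q2 - P2*Q1 - emb q = 0 \<or> P1*Q2 - P2*Q1 + emb q = 0" by (rule divisors_zero)
    hence "P1*Q2 - P2*Q1 = 1 * emb q \<or> P1*Q2 - P2*Q1 = (-1) * emb q"
    proof (elim disjE)
      assume "P1*Q2 - P2*Q1 - emb q = 0" thus ?thesis by simp
    next
      assume "P1*Q2 - P2*Q1 + emb q = 0" thus ?thesis by (simp add: eq_neg_iff_add_eq_0)
    qed
    thus ?thesis using that by blast
  qed
  have two: "(2::'a) \<noteq> 0"
  proof
    assume "(2::'a) = 0"
    with two_nz[OF H] show False by simp
  qed
  have PQ: "P1*Q2 = inverse 2 * (\<epsilon> * A + \<sigma> * emb q)"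
  proof -
    have "\<epsilon> * A + \<sigma> * emb q = 2 * (P1*Q2)" unfolding epsA sig(2)[symmetric] by (simp add: algebra_simps)
    hence "inverse 2 * (\<epsilon> * A + \<sigma> * emb q) = (inverse 2 * 2) * (P1*Q2)" by (simp only: mult.assoc)
    thus ?thesis using two by simp
  qed
  have Eu: "emb uI \<in> EE d emb" "emb u12 \<in> EE d emb" "emb u1 \<in> EE d emb" "emb u2 \<in> EE d emb" "emb q \<in> EE d emb"
    using inL q(1) by (simp_all add: EE_emb[OF H])
  have Es: "\<epsilon> \<in> EE d emb" "\<sigma> \<in> EE d emb" using eps sig(1) by (simp_all add: EE_pm[OF H])
  have Eh: "inverse 2 \<in> EE d emb" by (rule EE_half[OF H])
  have AE: "A \<in> EE d emb" unfolding A_def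
    by (intro EE_diff[OF H] EE_mult[OF H] Eu)
  have "P1*Q2 \<in> EE d emb" unfolding PQ
    by (intro EE_mult[OF H] EE_add[OF H] Eh Es Eu AE)
  then obtain m where m: "m \<in> Lam d" "emb m = P1*Q2" using EE_obtain[OF H] by blast
  have "P2*Q1 = \<epsilon> * A - P1*Q2" unfolding epsA by simp
  moreover have "\<epsilon> * A - P1*Q2 \<in> EE d emb"
    by (intro EE_diff[OF H] EE_mult[OF H] Es AE \<open>P1*Q2 \<in> EE d emb\<close>)
  ultimately have "P2*Q1 \<in> EE d emb" by simp
  then obtain m2 where m2: "m2 \<in> Lam d" "emb m2 = P2*Q1" using EE_obtain[OF H] by blast
  have "emb (m*m2) = emb (u1*u2)"
  proof -
    have "emb (m*m2) = (P1*Q2)*(P2*Q1)" using m m2 by (simp add: emb_mult[OF H])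
    also have "\<dots> = (P1*Q1)*(P2*Q2)" by (simp add: ac_simps)
    also have "\<dots> = emb (u1*u2)" using inL by (simp add: h1 h2 emb_mult[OF H])
    finally show ?thesis .
  qed
  hence mm2: "m*m2 = u1*u2" using emb_inj[OF H] Lam_mult m m2 inL by blast
  obtain v where v: "v \<in> Lam d" "u1*u2*v = 1" using unit_mult[OF H u1 u2] by (auto simp: unit_of_Lam_def)
  define mi where "mi = m2*v"
  have mi: "mi \<in> Lam d" "m*mi = 1" using m2 v mm2 by (simp_all add: mi_def Lam_mult mult.assoc[symmetric])
  obtain u1i where u1i: "u1i \<in> Lam d" "u1*u1i = 1" using u1 by (auto simp: unit_of_Lam_def)
  obtain u2i where u2i: "u2i \<in> Lam d" "u2*u2i = 1" using u2 by (auto simp: unit_of_Lam_def)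
  obtain uIi where uIi: "uIi \<in> Lam d" "uI*uIi = 1" using uI by (auto simp: unit_of_Lam_def)
  obtain u12i where u12i: "u12i \<in> Lam d" "u12*u12i = 1" using u12 by (auto simp: unit_of_Lam_def)
  define X where "X = u1*mi"
  define W where "W = m*u2i"
  have XL: "X \<in> Lam d" "W \<in> Lam d" using inL mi u2i m by (simp_all add: X_def W_def Lam_mult)
  have embmi: "emb mi = inverse (P1*Q2)"
  proof -
    have "emb m * emb mi = 1" using emb_mult[OF H m(1) mi(1)] mi(2) emb_one[OF H] by simp
    hence "P1*Q2 * emb mi = 1" using m(2) by simp
    thus ?thesis by (rule inverse_unique[symmetric])
  qed
  have embu2i: "emb u2i = inverse (P2*Q2)"
  proof -
    have "emb u2 * emb u2i = 1" using emb_mult[OF H inL(4) u2i(1)] u2i(2) emb_one[OF H] by simp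
    hence "P2*Q2 * emb u2i = 1" using h2 by simp
    thus ?thesis by (rule inverse_unique[symmetric])
  qed
  have eX: "emb X = Q1/Q2"
    using inL mi nz by (simp add: X_def emb_mult[OF H] embmi h1[symmetric] field_simps)
  have eW: "emb W = P1/P2"
    using u2i m nz by (simp add: W_def emb_mult[OF H] embu2i field_simps)
  obtain eL :: lpoly where eL: "eL = 1 \<or> eL = -1" "emb eL = \<epsilon>" "eL \<in> Lam d"
  proof (cases "\<epsilon> = 1")
    case True thus ?thesis using that[of 1] Lam_one emb_one[OF H] by auto
  next
    case False
    hence "\<epsilon> = -1" using eps by auto
    moreover have "emb (-1) = -1" using emb_uminus[OF H Lam_one] emb_one[OF H] by simp
    ultimately show ?thesis using that[of "-1"] Lam_one Lam_uminus by auto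
  qed
  have eLL: "eL * eL = 1" using eL(1) by auto
  have key: "emb (uI*u12) = emb (u2 * ((1 + eL*W) * (1 + eL*X)))"
  proof -
    have "emb (u2 * ((1 + eL*W) * (1 + eL*X))) = (P2*Q2) * ((1 + \<epsilon> * (P1/P2)) * (1 + \<epsilon>*(Q1/Q2)))"
      using inL XL eL Lam_one
      by (simp add: emb_mult[OF H] emb_add[OF H] Lam_mult Lam_add emb_one[OF H] eX eW h2)
    also have "\<dots> = (e1*P1+e2*P2)*(e1*Q1+e2*Q2)"
      using nz e1 e2 unfolding \<epsilon>_def by (auto simp: field_simps)
    finally show ?thesis using inL by (simp add: emb_mult[OF H] hI)
  qed
  have keyL: "uI*u12 = u2 * ((1 + eL*W) * (1 + eL*X))"
    by (rule emb_inj[OF H _ _ key]) (use inL XL eL Lam_one in \<open>simp_all add: Lam_mult Lam_add\<close>)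
  have U1: "(1 + eL*X) * (u2 * (1 + eL*W) * uIi * u12i) = 1"
  proof -
    have "(1 + eL*X) * (u2 * (1 + eL*W) * uIi * u12i) = (uI*u12) * (uIi * u12i)"
      unfolding keyL by (simp add: ac_simps)
    also have "\<dots> = (uI*uIi) * (u12*u12i)" by (simp add: ac_simps)
    finally show ?thesis using uIi u12i by simp
  qed
  have U2: "(eL*X) * (eL*(m*u1i)) = 1"
  proof -
    have "(eL*X) * (eL*(m*u1i)) = (eL*eL) * (u1*u1i) * (m*mi)" by (simp add: X_def ac_simps)
    thus ?thesis using eLL u1i mi by simp
  qed
  obtain c where c: "eL*X = lconst c" using unit_plus_one_const[OF U2 U1] by blast
  have "X = eL * lconst c" using c eLL by (metis mult.assoc mult_1)
  then obtain c' where "X = lconst c'"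
    using eL(1) by (metis lconst_mult lconst_one lconst_uminus)
  thus ?thesis using eX by metis
qed

end



definition Dv :: "nat \<Rightarrow> (nat \<Rightarrow> 'a::comm_ring_1) list \<Rightarrow> 'a" where
  "Dv k vs = det (mat k k (\<lambda>(r,c). (vs!r) c))"

definition del :: "nat \<Rightarrow> 'b list \<Rightarrow> 'b list" where
  "del t us = take t us @ drop (Suc t) us"

lemma del_nth: "t < length us \<Longrightarrow> r < length us - 1 \<Longrightarrow> del t us ! r = us ! insert_index t r"
  unfolding del_def insert_index_def by (auto simp: nth_append min_def)

lemma cramer:
  fixes us :: "(nat \<Rightarrow> 'a::comm_ring_1) list"
  assumes len: "length us = Suc k" and c: "c < k"
  shows "(\<Sum>t<Suc k. (-1)^t * Dv k (del t us) * (us!t) c) = 0"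
proof -
  define N where "N = mat (Suc k) (Suc k) (\<lambda>(r,c'). if c' = 0 then (us!r) c else (us!r) (c'-1))"
  have N: "N \<in> carrier_mat (Suc k) (Suc k)" by (simp add: N_def)
  have "det N = 0"
    by (rule det_identical_columns[OF N, of 0 "Suc c"]) (use c in \<open>auto simp: N_def intro!: eq_vecI\<close>)
  moreover have "det N = (\<Sum>t<Suc k. N $$ (t,0) * cofactor N t 0)"
    by (rule laplace_expansion_column[OF N]) simp
  moreover have "N $$ (t,0) * cofactor N t 0 = (-1)^t * Dv k (del t us) * (us!t) c" if t: "t < Suc k" for t
  proof -
    have "mat_delete N t 0 = mat k k (\<lambda>(r,c). (del t us ! r) c)"
      by (rule eq_matI) (use t len in \<open>auto simp: mat_delete_def N_def del_nth insert_index_def\<close>)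
    thus ?thesis using t by (simp add: cofactor_def Dv_def N_def)
  qed
  ultimately show ?thesis by simp
qed

lemma lin_last:
  fixes ps :: "(nat \<Rightarrow> 'a::comm_ring_1) list"
  assumes len: "length ps = m"
  shows "Dv (Suc m) (ps @ [v]) = (\<Sum>c<Suc m. v c * cofactor (mat (Suc m) (Suc m) (\<lambda>(r,c). ((ps@[\<lambda>_. 0])!r) c)) m c)"
proof -
  define A where "A = mat (Suc m) (Suc m) (\<lambda>(r,c). ((ps@[v])!r) c)"
  have A: "A \<in> carrier_mat (Suc m) (Suc m)" by (simp add: A_def)
  have "Dv (Suc m) (ps @ [v]) = (\<Sum>c<Suc m. A $$ (m,c) * cofactor A m c)"
    unfolding Dv_def A_def[symmetric] by (rule laplace_expansion_row[OF A]) simp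
  also have "\<dots> = (\<Sum>c<Suc m. v c * cofactor (mat (Suc m) (Suc m) (\<lambda>(r,c). ((ps@[\<lambda>_. 0])!r) c)) m c)"
  proof (rule sum.cong[OF refl])
    fix c assume c: "c \<in> {..<Suc m}"
    have "mat_delete A m c = mat_delete (mat (Suc m) (Suc m) (\<lambda>(r,c). ((ps@[\<lambda>_. 0])!r) c)) m c"
      by (rule eq_matI) (use len in \<open>auto simp: mat_delete_def A_def nth_append\<close>)
    thus "A $$ (m,c) * cofactor A m c = v c * cofactor (mat (Suc m) (Suc m) (\<lambda>(r,c). ((ps@[\<lambda>_. 0])!r) c)) m c"
      using c len by (simp add: cofactor_def A_def nth_append)
  qed
  finally show ?thesis .
qed

lemma Dv_rep:
  assumes "length vs = k" "r1 < k" "r2 < k" "r1 \<noteq> r2" "vs!r1 = vs!r2"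
  shows "Dv k vs = 0"
  unfolding Dv_def
  by (rule det_identical_rows[of _ k r1 r2]) (use assms in \<open>auto intro!: eq_vecI\<close>)

lemma plucker_v:
  fixes s :: "(nat \<Rightarrow> 'a::comm_ring_1) list"
  assumes len: "length s = m"
  shows "Dv (Suc (Suc m)) (s@[y,z]) * Dv (Suc (Suc m)) (s@[w,x])
       - Dv (Suc (Suc m)) (s@[x,z]) * Dv (Suc (Suc m)) (s@[w,y])
       + Dv (Suc (Suc m)) (s@[x,y]) * Dv (Suc (Suc m)) (s@[w,z]) = 0"
proof -
  define k where "k = Suc (Suc m)"
  define us where "us = s @ [x,y,z]"
  define C where "C = (\<lambda>c. cofactor (mat (Suc (Suc m)) (Suc (Suc m)) (\<lambda>(r,c). (((s@[w])@[\<lambda>_. 0])!r) c)) (Suc m) c)"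
  define phi where "phi = (\<lambda>v. Dv k (s@[w,v]))"
  have phi: "phi v = (\<Sum>c<k. v c * C c)" for v
    using lin_last[of "s@[w]" "Suc m" v] len by (simp add: phi_def k_def C_def)
  have lus: "length us = Suc k" by (simp add: us_def len k_def)
  have "0 = (\<Sum>c<k. C c * (\<Sum>t<Suc k. (-1)^t * Dv k (del t us) * (us!t) c))"
    using cramer[OF lus] by simp
  also have "\<dots> = (\<Sum>t<Suc k. (-1)^t * Dv k (del t us) * phi (us!t))"
    unfolding phi
  proof -
    have "(\<Sum>c<k. C c * (\<Sum>t<Suc k. (-1)^t * Dv k (del t us) * (us!t) c))
       = (\<Sum>c<k. \<Sum>t<Suc k. (-1)^t * Dv k (del t us) * ((us!t) c * C c))"
      by (rule sum.cong[OF refl], subst sum_distrib_left, rule sum.cong[OF refl], simp add: ac_simps)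
    also have "\<dots> = (\<Sum>t<Suc k. \<Sum>c<k. (-1)^t * Dv k (del t us) * ((us!t) c * C c))"
      by (rule sum.swap)
    also have "\<dots> = (\<Sum>t<Suc k. (-1)^t * Dv k (del t us) * (\<Sum>c<k. (us!t) c * C c))"
      by (simp add: sum_distrib_left)
    finally show "(\<Sum>c<k. C c * (\<Sum>t<Suc k. (-1)^t * Dv k (del t us) * (us!t) c))
       = (\<Sum>t<Suc k. (-1)^t * Dv k (del t us) * (\<Sum>c<k. (us!t) c * C c))" .
  qed
  also have "\<dots> = (\<Sum>t\<in>{..<m} \<union> {m, Suc m, Suc (Suc m)}. (-1)^t * Dv k (del t us) * phi (us!t))"
    by (rule sum.cong) (auto simp: k_def)
  also have "\<dots> = (\<Sum>t<m. (-1)^t * Dv k (del t us) * phi (us!t)) + (\<Sum>t\<in>{m, Suc m, Suc (Suc m)}. (-1)^t * Dv k (del t us) * phi (us!t))"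
    by (rule sum.union_disjoint) auto
  also have "(\<Sum>t<m. (-1)^t * Dv k (del t us) * phi (us!t)) = 0"
  proof (rule sum.neutral, rule ballI)
    fix t assume t: "t \<in> {..<m}"
    have "phi (us!t) = 0" unfolding phi_def
      by (rule Dv_rep[of _ _ t "Suc m"]) (use t len in \<open>auto simp: k_def us_def nth_append\<close>)
    thus "(-1)^t * Dv k (del t us) * phi (us!t) = 0" by simp
  qed
  also have "(\<Sum>t\<in>{m, Suc m, Suc (Suc m)}. (-1)^t * Dv k (del t us) * phi (us!t))
     = (-1)^m * (Dv k (s@[y,z]) * phi x - Dv k (s@[x,z]) * phi y + Dv k (s@[x,y]) * phi z)"
  proof -
    have u: "us!m = x" "us!Suc m = y" "us!Suc (Suc m) = z" using len by (auto simp: us_def nth_append)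
    have d: "del m us = s@[y,z]" "del (Suc m) us = s@[x,z]" "del (Suc (Suc m)) us = s@[x,y]"
      using len by (auto simp: us_def del_def)
    have "m \<noteq> Suc m" "m \<noteq> Suc (Suc m)" "Suc m \<noteq> Suc (Suc m)" by auto
    hence "(\<Sum>t\<in>{m, Suc m, Suc (Suc m)}. (-1)^t * Dv k (del t us) * phi (us!t))
       = (-1)^m * Dv k (del m us) * phi (us!m) + (-1)^Suc m * Dv k (del (Suc m) us) * phi (us!Suc m)
         + (-1)^Suc (Suc m) * Dv k (del (Suc (Suc m)) us) * phi (us!Suc (Suc m))"
      by (simp add: add.assoc)
    also have "\<dots> = (-1)^m * (Dv k (s@[y,z]) * phi x - Dv k (s@[x,z]) * phi y + Dv k (s@[x,y]) * phi z)"
      unfolding u d by (simp add: ring_distribs)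
    finally show ?thesis .
  qed
  finally have "(-1)^m * (Dv k (s@[y,z]) * phi x - Dv k (s@[x,z]) * phi y + Dv k (s@[x,y]) * phi z) = (0::'a)" by simp
  hence "Dv k (s@[y,z]) * phi x - Dv k (s@[x,z]) * phi y + Dv k (s@[x,y]) * phi z = 0"
  proof -
    let ?X = "Dv k (s@[y,z]) * phi x - Dv k (s@[x,z]) * phi y + Dv k (s@[x,y]) * phi z"
    have "?X = ((-1)^m * (-1)^m) * ?X" by simp
    also have "\<dots> = (-1)^m * ((-1)^m * ?X)" by (simp only: mult.assoc)
    finally show ?thesis using \<open>(-1)^m * ?X = 0\<close> by simp
  qed
  thus ?thesis by (simp add: phi_def k_def)
qed

lemma perm_sign:
  fixes xs ys :: "nat list"
  assumes dx: "distinct xs" and dy: "distinct ys" and st: "set xs = set ys" and len: "length xs = k"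
  shows "\<exists>\<sigma>::'a::comm_ring_1. (\<sigma> = 1 \<or> \<sigma> = -1) \<and> (\<forall>f::nat \<Rightarrow> nat \<Rightarrow> 'a. Dv k (map f ys) = \<sigma> * Dv k (map f xs))"
proof -
  have leny: "length ys = k" using dx dy st len by (metis distinct_card)
  define p where "p = (\<lambda>i. if i < k then (SOME r. r < k \<and> xs!r = ys!i) else i)"
  have ex: "\<exists>r. r < k \<and> xs!r = ys!i" if "i < k" for i
  proof -
    have "ys!i \<in> set xs" using that leny st by auto
    thus ?thesis using len by (auto simp: in_set_conv_nth)
  qed
  have pin: "p i < k" and pxs: "xs ! (p i) = ys ! i" if "i < k" for i
    using someI_ex[OF ex[OF that]] that by (auto simp: p_def)
  have inj: "inj_on p {0..<k}"
  proof (rule inj_onI)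
    fix i1 i2 assume "i1 \<in> {0..<k}" "i2 \<in> {0..<k}" "p i1 = p i2"
    hence "ys ! i1 = ys ! i2" using pxs by (metis atLeastLessThan_iff)
    thus "i1 = i2" using dy leny \<open>i1 \<in> {0..<k}\<close> \<open>i2 \<in> {0..<k}\<close> by (simp add: nth_eq_iff_index_eq)
  qed
  have img: "p ` {0..<k} = {0..<k}"
  proof -
    have "p ` {0..<k} \<subseteq> {0..<k}" using pin by auto
    moreover have "card (p ` {0..<k}) = card {0..<k}" using inj by (simp add: card_image)
    ultimately show ?thesis by (simp add: card_subset_eq)
  qed
  have perm: "p permutes {0..<k}"
    by (rule bij_imp_permutes) (use inj img in \<open>auto simp: bij_betw_def p_def\<close>)
  show ?thesis
  proof (intro exI conjI allI)
    show "(signof p :: 'a) = 1 \<or> signof p = -1" by (cases rule: sign_cases[of p]) auto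
    fix f :: "nat \<Rightarrow> nat \<Rightarrow> 'a"
    define A where "A = mat k k (\<lambda>(r,c). (map f xs ! r) c)"
    have A: "A \<in> carrier_mat k k" by (simp add: A_def)
    have "mat k k (\<lambda>(r,c). (map f ys ! r) c) = mat k k (\<lambda>(i,j). A $$ (p i, j))"
      by (rule eq_matI) (use pin pxs leny len in \<open>auto simp: A_def\<close>)
    hence "Dv k (map f ys) = det (mat k k (\<lambda>(i,j). A $$ (p i, j)))" by (simp add: Dv_def)
    also have "\<dots> = signof p * det A" by (rule det_permute_rows[OF A perm])
    finally show "Dv k (map f ys) = signof p * Dv k (map f xs)" by (simp add: Dv_def A_def)
  qed
qed

definition DS :: "nat \<Rightarrow> (nat \<Rightarrow> nat \<Rightarrow> 'a::comm_ring_1) \<Rightarrow> nat set \<Rightarrow> 'a" where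
  "DS k f J = Dv k (map f (map (pick J) [0..<k]))"

lemma pick_list:
  assumes "finite J" "card J = k"
  shows "distinct (map (pick J) [0..<k])" "set (map (pick J) [0..<k]) = J"
proof -
  show d: "distinct (map (pick J) [0..<k])"
    unfolding distinct_map
    by (auto intro!: inj_onI simp: assms) (metis assms(2) linorder_neqE_nat pick_mono_le order_less_irrefl)
  have "set (map (pick J) [0..<k]) \<subseteq> J" using assms by (auto intro: pick_in_set_le)
  moreover have "card (set (map (pick J) [0..<k])) = card J" using distinct_card[OF d] assms by simp
  ultimately show "set (map (pick J) [0..<k]) = J" using assms by (simp add: card_subset_eq)
qed

lemma DS_list:
  assumes "finite J" "card J = k" "distinct xs" "set xs = J"
  shows "\<exists>\<sigma>::'a::comm_ring_1. (\<sigma> = 1 \<or> \<sigma> = -1) \<and> (\<forall>f::nat \<Rightarrow> nat \<Rightarrow> 'a. DS k f J = \<sigma> * Dv k (map f xs))"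
proof -
  have "length xs = k" using assms by (metis distinct_card)
  thus ?thesis unfolding DS_def using perm_sign[of xs "map (pick J) [0..<k]" k] pick_list[OF assms(1,2)] assms
    by (simp add: map_map)
qed

lemma sq_sign: "(\<sigma>::'a::comm_ring_1) = 1 \<or> \<sigma> = -1 \<Longrightarrow> \<sigma> * \<sigma> = 1"
  by auto

lemma plucker_sets:
  fixes I :: "nat set"
  assumes fin: "finite I" and cI: "card I = k" and ij: "i \<in> I" "j \<in> I" "i \<noteq> j"
    and ab: "a \<notin> I" "b \<notin> I" "a \<noteq> b"
  shows "\<exists>e1 e2 :: 'a::comm_ring_1. (e1 = 1 \<or> e1 = -1) \<and> (e2 = 1 \<or> e2 = -1) \<and>
     (\<forall>f. DS k f I * DS k f (swap2 I i j a b) =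
        e1 * (DS k f (swap1 I i a) * DS k f (swap1 I j b)) + e2 * (DS k f (swap1 I i b) * DS k f (swap1 I j a)))"
proof -
  define S where "S = I - {i,j}"
  define s where "s = sorted_list_of_set S"
  have finS: "finite S" using fin by (simp add: S_def)
  have ds: "distinct s" and ss: "set s = S" using finS by (auto simp: s_def)
  have cS: "card S = k - 2" using fin ij cI by (simp add: S_def card_Diff_subset)
  have k2: "k \<ge> 2" using card_mono[OF fin, of "{i,j}"] ij cI by auto
  define m where "m = k - 2"
  have ls: "length s = m" using cS ds ss m_def by (metis distinct_card)
  have km: "k = Suc (Suc m)" using k2 m_def by simp
  have iS: "i \<notin> S" "j \<notin> S" "a \<notin> S" "b \<notin> S" using ab by (auto simp: S_def)
  have nab: "a \<noteq> i" "a \<noteq> j" "b \<noteq> i" "b \<noteq> j" using ab ij by auto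
  have setI: "I = set (s@[j,i])" using ij by (auto simp: ss S_def)
  have set12: "swap2 I i j a b = set (s@[a,b])" by (auto simp: ss S_def swap2_def)
  have setia: "swap1 I i a = set (s@[j,a])" using ij by (auto simp: ss S_def swap1_def)
  have setjb: "swap1 I j b = set (s@[i,b])" using ij by (auto simp: ss S_def swap1_def)
  have setib: "swap1 I i b = set (s@[j,b])" using ij by (auto simp: ss S_def swap1_def)
  have setja: "swap1 I j a = set (s@[i,a])" using ij by (auto simp: ss S_def swap1_def)
  have gen: "\<exists>\<sigma>::'a. (\<sigma> = 1 \<or> \<sigma> = -1) \<and> (\<forall>f::nat \<Rightarrow> nat \<Rightarrow> 'a. DS k f (set (s@[x,y])) = \<sigma> * Dv k (map f (s@[x,y])))"
    if "x \<notin> S" "y \<notin> S" "x \<noteq> y" for x y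
  proof (rule DS_list)
    show "distinct (s@[x,y])" using that ds ss by auto
    thus "card (set (s@[x,y])) = k" using ls km by (simp add: distinct_card)
  qed auto
  obtain sI :: 'a where sI: "sI = 1 \<or> sI = -1" "\<And>f. DS k f I = sI * Dv k (map f (s@[j,i]))"
    using gen[of j i] iS ij setI by metis
  obtain s12 :: 'a where s12: "s12 = 1 \<or> s12 = -1" "\<And>f. DS k f (swap2 I i j a b) = s12 * Dv k (map f (s@[a,b]))"
    using gen[of a b] iS ab set12 by metis
  obtain sia :: 'a where sia: "sia = 1 \<or> sia = -1" "\<And>f. DS k f (swap1 I i a) = sia * Dv k (map f (s@[j,a]))"
    using gen[of j a] iS nab setia by metis
  obtain sjb :: 'a where sjb: "sjb = 1 \<or> sjb = -1" "\<And>f. DS k f (swap1 I j b) = sjb * Dv k (map f (s@[i,b]))"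
    using gen[of i b] iS nab setjb by metis
  obtain sib :: 'a where sib: "sib = 1 \<or> sib = -1" "\<And>f. DS k f (swap1 I i b) = sib * Dv k (map f (s@[j,b]))"
    using gen[of j b] iS nab setib by metis
  obtain sja :: 'a where sja: "sja = 1 \<or> sja = -1" "\<And>f. DS k f (swap1 I j a) = sja * Dv k (map f (s@[i,a]))"
    using gen[of i a] iS nab setja by metis
  show ?thesis
  proof (intro exI conjI allI)
    show "sI * s12 * sia * sjb = 1 \<or> sI * s12 * sia * sjb = -1" using sI(1) s12(1) sia(1) sjb(1) by auto
    show "- (sI * s12 * sib * sja) = 1 \<or> - (sI * s12 * sib * sja) = -1" using sI(1) s12(1) sib(1) sja(1) by auto
    fix f :: "nat \<Rightarrow> nat \<Rightarrow> 'a"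
    define s' where "s' = map f s"
    have ls': "length s' = m" using ls by (simp add: s'_def)
    have P: "Dv k (s'@[f a, f b]) * Dv k (s'@[f j, f i]) - Dv k (s'@[f i, f b]) * Dv k (s'@[f j, f a])
       + Dv k (s'@[f i, f a]) * Dv k (s'@[f j, f b]) = 0"
      using plucker_v[OF ls', of "f a" "f b" "f j" "f i"] km by simp
    have e1: "sia * sia = 1" "sjb * sjb = 1" "sib * sib = 1" "sja * sja = 1"
      using sia(1) sjb(1) sib(1) sja(1) by auto
    have "DS k f I * DS k f (swap2 I i j a b) = sI * s12 * (Dv k (s'@[f j, f i]) * Dv k (s'@[f a, f b]))"
      using sI(2) s12(2) by (simp add: s'_def)
    also have "Dv k (s'@[f j, f i]) * Dv k (s'@[f a, f b]) = Dv k (s'@[f j, f a]) * Dv k (s'@[f i, f b]) - Dv k (s'@[f j, f b]) * Dv k (s'@[f i, f a])"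
      using P by (simp add: algebra_simps eq_neg_iff_add_eq_0)
    also have "sI * s12 * (Dv k (s'@[f j, f a]) * Dv k (s'@[f i, f b]) - Dv k (s'@[f j, f b]) * Dv k (s'@[f i, f a]))
       = sI * s12 * sia * sjb * ((sia * Dv k (s'@[f j, f a])) * (sjb * Dv k (s'@[f i, f b])))
         + - (sI * s12 * sib * sja) * ((sib * Dv k (s'@[f j, f b])) * (sja * Dv k (s'@[f i, f a])))"
    proof -
      have "sI * s12 * sia * sjb * ((sia * Dv k (s'@[f j, f a])) * (sjb * Dv k (s'@[f i, f b])))
          = sI * s12 * (sia * sia) * (sjb * sjb) * (Dv k (s'@[f j, f a]) * Dv k (s'@[f i, f b]))"
        by (simp add: ac_simps)
      moreover have "- (sI * s12 * sib * sja) * ((sib * Dv k (s'@[f j, f b])) * (sja * Dv k (s'@[f i, f a])))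
          = - (sI * s12 * (sib * sib) * (sja * sja) * (Dv k (s'@[f j, f b]) * Dv k (s'@[f i, f a])))"
        by (simp add: ac_simps)
      ultimately show ?thesis using e1 by (simp add: algebra_simps)
    qed
    also have "\<dots> = sI * s12 * sia * sjb * (DS k f (swap1 I i a) * DS k f (swap1 I j b))
         + - (sI * s12 * sib * sja) * (DS k f (swap1 I i b) * DS k f (swap1 I j a))"
      using sia(2) sjb(2) sib(2) sja(2) by (simp add: s'_def)
    finally show "DS k f I * DS k f (swap2 I i j a b) = sI * s12 * sia * sjb * (DS k f (swap1 I i a) * DS k f (swap1 I j b))
         + - (sI * s12 * sib * sja) * (DS k f (swap1 I i b) * DS k f (swap1 I j a))" .
  qed
qed




lemma pick_upto: "r < k \<Longrightarrow> pick {0..<k} r = r"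
proof (induction r)
  case 0 thus ?case by (simp add: Least_equality)
next
  case (Suc r)
  hence "pick {0..<k} r = r" by simp
  thus ?case using Suc.prems by (auto intro!: Least_equality)
qed

lemma DeltaR_DS:
  assumes R: "R \<in> carrier_mat n k" and J: "J \<subseteq> {0..<n}" "card J = k"
  shows "DeltaR k R J = DS k (\<lambda>r c. R $$ (r,c)) J"
proof -
  have c1: "{i. i < dim_row R \<and> i \<in> J} = J" using R J by auto
  have c2: "{j. j < dim_col R \<and> j \<in> {0..<k}} = {0..<k}" using R by auto
  have fin: "finite J" using J finite_subset by blast
  have "submatrix R J {0..<k} = mat k k (\<lambda>(r,c). (map (\<lambda>r c. R $$ (r,c)) (map (pick J) [0..<k]) ! r) c)"
    unfolding submatrix_def c1 c2 J(2) by (rule eq_matI) (auto simp: pick_upto)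
  thus ?thesis by (simp add: DeltaR_def DS_def Dv_def)
qed

lemma DeltaL_DS:
  assumes L: "L \<in> carrier_mat k n" and J: "J \<subseteq> {0..<n}" "card J = k"
  shows "DeltaL k L J = DS k (\<lambda>r c. L $$ (c,r)) J"
proof -
  have c1: "{i. i < dim_col L \<and> i \<in> J} = J" using L J by auto
  have c2: "{j. j < dim_row L \<and> j \<in> {0..<k}} = {0..<k}" using L by auto
  have S: "submatrix L {0..<k} J = mat k k (\<lambda>(r,c). L $$ (r, pick J c))"
    unfolding submatrix_def c1 c2 J(2) by (rule eq_matI) (auto simp: pick_upto)
  have "det (mat k k (\<lambda>(r,c). L $$ (r, pick J c))) = det (transpose_mat (mat k k (\<lambda>(r,c). L $$ (r, pick J c))))"
    by (rule det_transpose[symmetric, of _ k]) simp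
  also have "transpose_mat (mat k k (\<lambda>(r,c). L $$ (r, pick J c))) = mat k k (\<lambda>(r,c). (map (\<lambda>r c. L $$ (c,r)) (map (pick J) [0..<k]) ! r) c)"
    by (rule eq_matI) auto
  finally show ?thesis by (simp add: DeltaL_def DS_def Dv_def S)
qed

lemma ks_swap1:
  assumes "I \<in> ksubsets k n" "i \<in> I" "a \<in> {0..<n} - I"
  shows "swap1 I i a \<in> ksubsets k n"
proof -
  have fin: "finite I" using assms(1) by (auto simp: ksubsets_def intro: finite_subset)
  have "card I > 0" using fin assms(2) by (auto simp: card_gt_0_iff)
  thus ?thesis using assms fin by (auto simp: ksubsets_def swap1_def card_insert_if)
qed

lemma ks_swap2:
  assumes "I \<in> ksubsets k n" "i \<in> I" "j \<in> I" "i \<noteq> j" "a \<in> {0..<n} - I" "b \<in> {0..<n} - I" "a \<noteq> b"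
  shows "swap2 I i j a b \<in> ksubsets k n"
proof -
  have fin: "finite I" using assms(1) by (auto simp: ksubsets_def intro: finite_subset)
  have sub: "{i,j} \<subseteq> I" using assms by auto
  have c2: "card {i,j} = 2" using assms by simp
  have cI: "card I = k" using assms(1) by (simp add: ksubsets_def)
  have ge: "card I \<ge> 2" using card_mono[OF fin sub] c2 by simp
  have cD: "card (I - {i,j}) = card I - 2" using card_Diff_subset[OF _ sub] c2 by simp
  have nin: "a \<notin> I - {i,j}" "b \<notin> I - {i,j}" "a \<notin> insert b (I - {i,j})" using assms by auto
  have "card (swap2 I i j a b) = card (I - {i,j}) + 2"
    unfolding swap2_def using fin nin by (simp add: card_insert_if)
  hence "card (swap2 I i j a b) = k" using cD ge cI by simp
  moreover have "swap2 I i j a b \<subseteq> {0..<n}" using assms by (auto simp: ksubsets_def swap2_def)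
  ultimately show ?thesis by (simp add: ksubsets_def)
qed

lemma emb_sgn:
  assumes H: "is_alg_closure_emb d emb" and s: "s \<in> {-1, 0, 1::int}"
  shows "emb (lconst (- of_int s * c)) = - of_int s * emb (lconst c)"
proof -
  have "lconst (- of_int s * c) = lconst (- of_int s) * lconst c" by (simp add: lconst_mult)
  hence e: "emb (lconst (- of_int s * c)) = emb (lconst (- of_int s)) * emb (lconst c)"
    using emb_mult[OF H Lam_lconst Lam_lconst] by simp
  have "emb (lconst (- of_int s)) = - of_int s"
  proof -
    consider "s = -1" | "s = 0" | "s = 1" using s by auto
    thus ?thesis
    proof cases
      case 1 thus ?thesis by (simp add: lconst_one emb_one[OF H])
    next
      case 2 thus ?thesis by (simp add: lconst_def emb_zero[OF H])
    next
      case 3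
      have "lconst (- 1) = - 1" by (simp add: lconst_uminus lconst_one)
      thus ?thesis using 3 emb_uminus[OF H Lam_one] emb_one[OF H] by simp
    qed
  qed
  thus ?thesis using e by simp
qed




theorem mainTheorem5:
  fixes d k n :: nat
    and emb :: "lpoly \<Rightarrow> 'a :: alg_closed_field"
    and L R :: "'a mat"
    and I :: "nat set" and i j a b :: nat
  assumes d: "1 \<le> d" and kn: "1 \<le> k" "k \<le> n"
    and closure: "is_alg_closure_emb d emb"
    and dimL: "L \<in> carrier_mat k n" and dimR: "R \<in> carrier_mat n k"
    and SA1: "\<forall>J \<in> ksubsets k n. DeltaR k R J \<noteq> 0"
    and SA2: "\<forall>J \<in> ksubsets k n. DeltaL k L J \<noteq> 0 \<longrightarrow>
                (\<exists>u. unit_of_Lam d u \<and> hh k L R J = emb u)"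
    and I: "I \<in> ksubsets k n"
    and ij: "i \<in> I" "j \<in> I" "i \<noteq> j"
    and ab: "a \<in> {0..<n} - I" "b \<in> {0..<n} - I" "a \<noteq> b"
    and nz: "hh k L R I * hh k L R (swap2 I i j a b) * hh k L R (swap1 I i a)
             * hh k L R (swap1 I i b) * hh k L R (swap1 I j a) * hh k L R (swap1 I j b) \<noteq> 0"
    and sq: "\<exists>q \<in> Lam d. Bc k L R I i j a b = (emb q)^2"
  shows "\<exists>c :: complex. Yc k R I i j a b = emb (lconst c)"
proof -
  define J12 where "J12 = swap2 I i j a b"
  define Jia where "Jia = swap1 I i a"
  define Jjb where "Jjb = swap1 I j b"
  define Jib where "Jib = swap1 I i b"
  define Jja where "Jja = swap1 I j a"
  have ks: "I \<in> ksubsets k n" "J12 \<in> ksubsets k n" "Jia \<in> ksubsets k n" "Jjb \<in> ksubsets k n"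
    "Jib \<in> ksubsets k n" "Jja \<in> ksubsets k n"
    using I ks_swap2[OF I ij ab] ks_swap1[OF I ij(1) ab(1)] ks_swap1[OF I ij(2) ab(2)]
      ks_swap1[OF I ij(1) ab(2)] ks_swap1[OF I ij(2) ab(1)]
    by (simp_all add: J12_def Jia_def Jjb_def Jib_def Jja_def)
  have hnz: "hh k L R I \<noteq> 0" "hh k L R J12 \<noteq> 0" "hh k L R Jia \<noteq> 0" "hh k L R Jjb \<noteq> 0"
    "hh k L R Jib \<noteq> 0" "hh k L R Jja \<noteq> 0"
    using nz by (auto simp: J12_def Jia_def Jjb_def Jib_def Jja_def)
  have Lnz: "DeltaL k L J \<noteq> 0" and Rnz: "DeltaR k R J \<noteq> 0" if "hh k L R J \<noteq> 0" for J
    using that by (auto simp: hh_def)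
  obtain uI where uI: "unit_of_Lam d uI" "hh k L R I = emb uI" using SA2 ks(1) Lnz hnz(1) by blast
  obtain u12 where u12: "unit_of_Lam d u12" "hh k L R J12 = emb u12" using SA2 ks(2) Lnz hnz(2) by blast
  obtain uia where uia: "unit_of_Lam d uia" "hh k L R Jia = emb uia" using SA2 ks(3) Lnz hnz(3) by blast
  obtain ujb where ujb: "unit_of_Lam d ujb" "hh k L R Jjb = emb ujb" using SA2 ks(4) Lnz hnz(4) by blast
  obtain uib where uib: "unit_of_Lam d uib" "hh k L R Jib = emb uib" using SA2 ks(5) Lnz hnz(5) by blast
  obtain uja where uja: "unit_of_Lam d uja" "hh k L R Jja = emb uja" using SA2 ks(6) Lnz hnz(6) by blast
  have inL: "uia \<in> Lam d" "ujb \<in> Lam d" "uib \<in> Lam d" "uja \<in> Lam d"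
    using uia ujb uib uja by (auto simp: unit_of_Lam_def)
  have finI: "finite I" "card I = k" using I by (auto simp: ksubsets_def intro: finite_subset)
  have abI: "a \<notin> I" "b \<notin> I" using ab by auto
  obtain e1 e2 :: 'a where e: "e1 = 1 \<or> e1 = -1" "e2 = 1 \<or> e2 = -1"
    and pl: "\<And>f. DS k f I * DS k f J12 = e1 * (DS k f Jia * DS k f Jjb) + e2 * (DS k f Jib * DS k f Jja)"
    using plucker_sets[OF finI ij abI ab(3)] unfolding J12_def Jia_def Jjb_def Jib_def Jja_def by blast
  have sub: "J \<subseteq> {0..<n} \<and> card J = k" if "J \<in> ksubsets k n" for J using that by (simp add: ksubsets_def)
  have DR: "DeltaR k R J = DS k (\<lambda>r c. R $$ (r,c)) J" if "J \<in> ksubsets k n" for J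
    using DeltaR_DS[OF dimR] sub[OF that] by blast
  have DL: "DeltaL k L J = DS k (\<lambda>r c. L $$ (c,r)) J" if "J \<in> ksubsets k n" for J
    using DeltaL_DS[OF dimL] sub[OF that] by blast
  define P1 where "P1 = DeltaL k L Jia * DeltaL k L Jjb"
  define P2 where "P2 = DeltaL k L Jib * DeltaL k L Jja"
  define Q1 where "Q1 = DeltaR k R Jia * DeltaR k R Jjb"
  define Q2 where "Q2 = DeltaR k R Jib * DeltaR k R Jja"
  have plL: "DeltaL k L I * DeltaL k L J12 = e1 * P1 + e2 * P2"
    unfolding P1_def P2_def using pl[of "\<lambda>r c. L $$ (c,r)"] DL ks by simp
  have plR: "DeltaR k R I * DeltaR k R J12 = e1 * Q1 + e2 * Q2"
    unfolding Q1_def Q2_def using pl[of "\<lambda>r c. R $$ (r,c)"] DR ks by simp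
  have nzPQ: "P1 \<noteq> 0" "P2 \<noteq> 0" "Q1 \<noteq> 0" "Q2 \<noteq> 0"
    unfolding P1_def P2_def Q1_def Q2_def using Lnz Rnz hnz by auto
  have hI: "emb uI * emb u12 = (e1*P1+e2*P2)*(e1*Q1+e2*Q2)"
  proof -
    have "emb uI * emb u12 = (DeltaL k L I * DeltaR k R I) * (DeltaL k L J12 * DeltaR k R J12)"
      using uI(2) u12(2) by (simp add: hh_def)
    also have "\<dots> = (DeltaL k L I * DeltaL k L J12) * (DeltaR k R I * DeltaR k R J12)" by (simp add: ac_simps)
    finally show ?thesis unfolding plL plR .
  qed
  have h1: "P1*Q1 = emb (uia*ujb)"
    using uia(2) ujb(2) emb_mult[OF closure inL(1,2)] by (simp add: P1_def Q1_def hh_def ac_simps)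
  have h2: "P2*Q2 = emb (uib*uja)"
    using uib(2) uja(2) emb_mult[OF closure inL(3,4)] by (simp add: P2_def Q2_def hh_def ac_simps)
  have sq': "\<exists>q\<in>Lam d. (emb uI * emb u12 - emb (uia*ujb) - emb (uib*uja))^2 - 4 * emb (uia*ujb) * emb (uib*uja) = (emb q)^2"
  proof -
    have "Bc k L R I i j a b = (emb uI * emb u12 - emb (uia*ujb) - emb (uib*uja))^2 - 4 * emb (uia*ujb) * emb (uib*uja)"
      unfolding Bc_def Ac_def
      using uI(2) u12(2) uia(2) ujb(2) uib(2) uja(2) emb_mult[OF closure inL(1,2)] emb_mult[OF closure inL(3,4)]
      by (simp add: J12_def Jia_def Jjb_def Jib_def Jja_def ac_simps)
    thus ?thesis using sq by simp
  qed
  obtain c where c: "Q1/Q2 = emb (lconst c)"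
    using core[OF closure e nzPQ uI(1) u12(1) unit_mult[OF closure uia(1) ujb(1)] unit_mult[OF closure uib(1) uja(1)] hI h1 h2 sq'] by blast
  define s where "s = sgn ((int i - int a) * (int i - int b) * (int j - int a) * (int j - int b))"
  have s: "s \<in> {-1, 0, 1}" by (auto simp: s_def sgn_if)
  have "Yc k R I i j a b = - of_int s * (Q1/Q2)"
    unfolding Yc_def s_def[symmetric] Q1_def Q2_def Jia_def Jjb_def Jib_def Jja_def by simp
  also have "\<dots> = emb (lconst (- of_int s * c))" using emb_sgn[OF closure s] c by simp
  finally show ?thesis by blast
qed


end
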